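(* Let $\mathcal{H}$ be a finite family of rooted digraphs. Let $D$ be a digraph, $k$ an integer, $W$ an $\mathcal{H}$-deletion set of $D$ with $|W|\le k+1$, and $\mathcal{S}=(S_1,\dots,S_q)$ an ordered partition of $W$. Let $Q$ be a set with $S_1\subseteq Q\subseteq V(D)\setminus(W\setminus S_1)$ such that $D[Q]$ contains no subgraph isomorphic to a graph of $\mathcal{H}$ and $N^+(Q)$ is a minimum $S_1$-$(W\setminus S_1)$ separator. Let $X$ be a solution of $(D,\mathcal{S},W,k)$ such that $R_D(S_1,X)\cap N^+(Q)=\emptyset$. Then there is a solution $X'$ for $(D,\mathcal{S},W,k)$ that contains $N^+(Q)$.
   Context: Subgraphs are not necessarily induced; strong components are maximal sets of mutually reachable vertices. A digraph is rooted if some vertex reaches all its vertices. $X$ is an $\mathcal{H}$-deletion set of $D$ if no strong component of $D-X$ contains a subgraph isomorphic to a graph in $\mathcal{H}$. A solution for $(D,\mathcal{S},W,k)$ is a set $X\subseteq V(D)$ with $|X|\le k$, $X\cap W=\emptyset$, $X$ an $\mathcal{H}$-deletion set, and $X$ intersecting every directed $S_i$-$S_j$ path in $D$ for all $i<j$. $N^+(Q)$ is the set of vertices outside $Q$ with an in-neighbour in $Q$. For disjoint $A,B$, an $A$-$B$ separator is a set $C$ disjoint from $A\cup B$ such that $D-C$ has no directed path from $A$ to $B$; it is minimum if of smallest size. $R_D(A,Y)$ is the set of vertices reachable from $A$ in $D-Y$. *)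

theory Defs
  imports Main
begin

definition digraph :: "'a set \<Rightarrow> ('a \<times> 'a) set \<Rightarrow> bool" where
  "digraph V E \<longleftrightarrow> finite V \<and> E \<subseteq> V \<times> V"

text \<open>Induced subdigraph D[U] and vertex deletion D - X.\<close>
definition induced_arcs :: "('a \<times> 'a) set \<Rightarrow> 'a set \<Rightarrow> ('a \<times> 'a) set" where
  "induced_arcs E U = E \<inter> (U \<times> U)"

definition reaches :: "'a set \<Rightarrow> ('a \<times> 'a) set \<Rightarrow> 'a \<Rightarrow> 'a \<Rightarrow> bool" where
  "reaches V E u v \<longleftrightarrow> u \<in> V \<and> v \<in> V \<and> (u, v) \<in> (induced_arcs E V)\<^sup>*"

definition rooted :: "'b set \<Rightarrow> ('b \<times> 'b) set \<Rightarrow> bool" where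
  "rooted V E \<longleftrightarrow> (\<exists>r\<in>V. \<forall>v\<in>V. reaches V E r v)"

definition contains_copy :: "'a set \<Rightarrow> ('a \<times> 'a) set \<Rightarrow> 'b set \<Rightarrow> ('b \<times> 'b) set \<Rightarrow> bool" where
  "contains_copy V E VH EH \<longleftrightarrow>
     (\<exists>f. inj_on f VH \<and> f ` VH \<subseteq> V \<and> (\<forall>(u, v)\<in>EH. (f u, f v) \<in> E))"

definition strong_component :: "'a set \<Rightarrow> ('a \<times> 'a) set \<Rightarrow> 'a set \<Rightarrow> bool" where
  "strong_component V E C \<longleftrightarrow>
     C \<noteq> {} \<and> C \<subseteq> V \<and> (\<forall>u\<in>C. \<forall>v\<in>C. reaches V E u v) \<and>
     (\<forall>w\<in>V. (\<exists>u\<in>C. reaches V E u w \<and> reaches V E w u) \<longrightarrow> w \<in> C)"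

definition H_deletion_set ::
  "('b set \<times> ('b \<times> 'b) set) set \<Rightarrow> 'a set \<Rightarrow> ('a \<times> 'a) set \<Rightarrow> 'a set \<Rightarrow> bool" where
  "H_deletion_set \<H> V E X \<longleftrightarrow>
     (\<forall>C. strong_component (V - X) (induced_arcs E (V - X)) C \<longrightarrow>
        (\<forall>(VH, EH)\<in>\<H>. \<not> contains_copy C (induced_arcs E C) VH EH))"

definition dpath :: "'a set \<Rightarrow> ('a \<times> 'a) set \<Rightarrow> 'a list \<Rightarrow> bool" where
  "dpath V E p \<longleftrightarrow> p \<noteq> [] \<and> distinct p \<and> set p \<subseteq> V \<and>
     (\<forall>i. Suc i < length p \<longrightarrow> (p ! i, p ! Suc i) \<in> E)"

definition ordered_partition :: "'a set list \<Rightarrow> 'a set \<Rightarrow> bool" where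
  "ordered_partition S W \<longleftrightarrow>
     (\<forall>i<length S. S ! i \<noteq> {}) \<and>
     (\<forall>i<length S. \<forall>j<length S. i \<noteq> j \<longrightarrow> S ! i \<inter> S ! j = {}) \<and>
     \<Union> (set S) = W"

definition is_solution ::
  "('b set \<times> ('b \<times> 'b) set) set \<Rightarrow> 'a set \<Rightarrow> ('a \<times> 'a) set \<Rightarrow> 'a set list \<Rightarrow> 'a set \<Rightarrow> int
     \<Rightarrow> 'a set \<Rightarrow> bool" where
  "is_solution \<H> V E S W k X \<longleftrightarrow>
     X \<subseteq> V \<and> int (card X) \<le> k \<and> X \<inter> W = {} \<and> H_deletion_set \<H> V E X \<and>
     (\<forall>i j p. i < j \<and> j < length S \<and> dpath V E p \<and> hd p \<in> S ! i \<and> last p \<in> S ! j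
        \<longrightarrow> set p \<inter> X \<noteq> {})"

definition out_nbrs :: "'a set \<Rightarrow> ('a \<times> 'a) set \<Rightarrow> 'a set \<Rightarrow> 'a set" where
  "out_nbrs V E Q = {v \<in> V - Q. \<exists>u\<in>Q. (u, v) \<in> E}"

definition separator :: "'a set \<Rightarrow> ('a \<times> 'a) set \<Rightarrow> 'a set \<Rightarrow> 'a set \<Rightarrow> 'a set \<Rightarrow> bool" where
  "separator V E A B C \<longleftrightarrow> C \<subseteq> V \<and> C \<inter> (A \<union> B) = {} \<and>
     \<not> (\<exists>p. dpath (V - C) (induced_arcs E (V - C)) p \<and> hd p \<in> A \<and> last p \<in> B)"

definition min_separator :: "'a set \<Rightarrow> ('a \<times> 'a) set \<Rightarrow> 'a set \<Rightarrow> 'a set \<Rightarrow> 'a set \<Rightarrow> bool" where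
  "min_separator V E A B C \<longleftrightarrow> separator V E A B C \<and>
     (\<forall>C'. separator V E A B C' \<longrightarrow> card C \<le> card C')"

definition reach_set :: "'a set \<Rightarrow> ('a \<times> 'a) set \<Rightarrow> 'a set \<Rightarrow> 'a set \<Rightarrow> 'a set" where
  "reach_set V E A Y = {v. \<exists>a\<in>A. reaches (V - Y) (induced_arcs E (V - Y)) a v}"

end

theory Submission
  imports Defs
begin

lemma cross_list:
  assumes "i0 < length p" "p ! i0 \<in> Q" "last p \<notin> Q"
  shows "\<exists>i\<ge>i0. Suc i < length p \<and> p ! i \<in> Q \<and> p ! Suc i \<notin> Q"
  using assms
proof (induction "length p - i0 - 1" arbitrary: i0)
  case 0
  then have "i0 = length p - 1" by simp
  moreover have "p \<noteq> []" using 0 by auto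
  ultimately have "p ! i0 = last p" by (simp add: last_conv_nth)
  then show ?case using 0 by simp
next
  case (Suc d)
  then have l: "Suc i0 < length p" by simp
  show ?case
  proof (cases "p ! Suc i0 \<in> Q")
    case True
    have "d = length p - Suc i0 - 1" using Suc by simp
    from Suc.hyps(1)[OF this l True Suc.prems(3)] obtain i where
      "i \<ge> Suc i0" "Suc i < length p \<and> p ! i \<in> Q \<and> p ! Suc i \<notin> Q" by blast
    then show ?thesis by (intro exI[of _ i]) simp
  next
    case False
    then show ?thesis using l Suc.prems(2) by (intro exI[of _ i0]) simp
  qed
qed

lemma cross_rt:
  assumes "(u, v) \<in> r\<^sup>*" "u \<in> Q" "v \<notin> Q"
  shows "\<exists>y z. (u, y) \<in> r\<^sup>* \<and> (y, z) \<in> r \<and> y \<in> Q \<and> z \<notin> Q"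
  using assms
proof (induction rule: rtrancl_induct)
  case base
  then show ?case by simp
next
  case (step y z)
  show ?case
  proof (cases "y \<in> Q")
    case True
    then show ?thesis using step.hyps step.prems(2) by (intro exI[of _ y] exI[of _ z]) simp
  next
    case False
    then show ?thesis using step.IH step.prems(1) by simp
  qed
qed

lemma reaches_trans:
  "reaches V E a b \<Longrightarrow> reaches V E b c \<Longrightarrow> reaches V E a c"
  unfolding reaches_def using rtrancl_trans by fast

lemma copy_mono:
  assumes "contains_copy C (induced_arcs E C) VH EH" "C \<subseteq> C'"
  shows "contains_copy C' (induced_arcs E C') VH EH"
proof -
  obtain f where f: "inj_on f VH" "f ` VH \<subseteq> C" "\<forall>(u, v)\<in>EH. (f u, f v) \<in> induced_arcs E C"
    using assms(1) unfolding contains_copy_def by blast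
  have "induced_arcs E C \<subseteq> induced_arcs E C'" using assms(2) unfolding induced_arcs_def by blast
  then have "\<forall>(u, v)\<in>EH. (f u, f v) \<in> induced_arcs E C'" using f(3) by blast
  moreover have "f ` VH \<subseteq> C'" using f(2) assms(2) by blast
  ultimately show ?thesis unfolding contains_copy_def using f(1) by blast
qed

lemma sc_within:
  assumes sc: "strong_component V' E'' C"
    and uv: "(u, x) \<in> (induced_arcs E'' V')\<^sup>*" "(x, v) \<in> (induced_arcs E'' V')\<^sup>*"
    and inC: "u \<in> C" "v \<in> C"
  shows "(u, x) \<in> (induced_arcs E'' V' \<inter> C \<times> C)\<^sup>*"
proof -
  let ?r = "induced_arcs E'' V'"
  have CV: "C \<subseteq> V'" and mut: "\<And>a b. a \<in> C \<Longrightarrow> b \<in> C \<Longrightarrow> reaches V' E'' a b"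
    and mx: "\<And>w. w \<in> V' \<Longrightarrow> \<exists>a\<in>C. reaches V' E'' a w \<and> reaches V' E'' w a \<Longrightarrow> w \<in> C"
    using sc unfolding strong_component_def by blast+
  have uV: "u \<in> V'" using CV inC by blast
  have claim: "x' \<in> C" if h1: "(u, x') \<in> ?r\<^sup>*" and h2: "(x', v) \<in> ?r\<^sup>*" for x'
  proof -
    have x'V: "x' \<in> V'"
      using h1 uV by (cases rule: rtranclE) (auto simp: induced_arcs_def)
    have "reaches V' E'' v u" using mut inC by blast
    then have vu: "(v, u) \<in> ?r\<^sup>*" unfolding reaches_def by blast
    have r1: "reaches V' E'' u x'" using uV x'V h1 unfolding reaches_def by blast
    have "(x', u) \<in> ?r\<^sup>*" using h2 vu by (rule rtrancl_trans)
    then have r2: "reaches V' E'' x' u" using uV x'V unfolding reaches_def by blast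
    show ?thesis using mx[OF x'V] r1 r2 inC by blast
  qed
  show ?thesis using uv(1,2)
  proof (induction rule: rtrancl_induct)
    case base then show ?case by simp
  next
    case (step y z)
    have yv: "(y, v) \<in> ?r\<^sup>*" using step(2,4) by (rule converse_rtrancl_into_rtrancl)
    have uy: "(u, y) \<in> (?r \<inter> C \<times> C)\<^sup>*" using step(3) yv by blast
    have yC: "y \<in> C" using claim[OF step(1) yv] .
    have uz: "(u, z) \<in> ?r\<^sup>*" using step(1,2) by (rule rtrancl.rtrancl_into_rtrancl)
    have zC: "z \<in> C" using claim[OF uz step(4)] .
    have "(y, z) \<in> ?r \<inter> C \<times> C" using step(2) yC zC by blast
    then show ?case by (rule rtrancl.rtrancl_into_rtrancl[OF uy])
  qed
qed

theorem lemma11: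
  fixes \<H> :: "('b set \<times> ('b \<times> 'b) set) set"
    and V :: "'a set" and E :: "('a \<times> 'a) set"
    and k :: int and W Q X :: "'a set" and S :: "'a set list"
  assumes fam: "finite \<H>" "\<forall>(VH, EH)\<in>\<H>. digraph VH EH \<and> rooted VH EH"
    and D: "digraph V E"
    and W: "W \<subseteq> V" "H_deletion_set \<H> V E W" "int (card W) \<le> k + 1"
    and S: "ordered_partition S W" "S \<noteq> []"
    and Q: "hd S \<subseteq> Q" "Q \<subseteq> V - (W - hd S)"
      "\<forall>(VH, EH)\<in>\<H>. \<not> contains_copy Q (induced_arcs E Q) VH EH"
      "min_separator V E (hd S) (W - hd S) (out_nbrs V E Q)"
    and X: "is_solution \<H> V E S W k X"
      "reach_set V E (hd S) X \<inter> out_nbrs V E Q = {}"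
  shows "\<exists>X'. is_solution \<H> V E S W k X' \<and> out_nbrs V E Q \<subseteq> X'"
proof -
  define P where "P = out_nbrs V E Q"
  define R where "R = reach_set V E (hd S) X"
  define N where "N = out_nbrs V E R"
  define X' where "X' = (X - Q) \<union> P"
  have fin: "finite V" and EV: "E \<subseteq> V \<times> V" using D unfolding digraph_def by auto
  have XV: "X \<subseteq> V" and cardX: "int (card X) \<le> k" and XW: "X \<inter> W = {}"
    and Xdel: "H_deletion_set \<H> V E X"
    and Xsep: "\<And>i j p. i < j \<Longrightarrow> j < length S \<Longrightarrow> dpath V E p \<Longrightarrow> hd p \<in> S ! i \<Longrightarrow>
        last p \<in> S ! j \<Longrightarrow> set p \<inter> X \<noteq> {}"
    using X(1) unfolding is_solution_def by blast+
  have PV: "P \<subseteq> V" unfolding P_def out_nbrs_def by blast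
  have Psep: "separator V E (hd S) (W - hd S) P" using Q(4) unfolding P_def min_separator_def by blast
  have Pmin: "\<And>C'. separator V E (hd S) (W - hd S) C' \<Longrightarrow> card P \<le> card C'"
    using Q(4) unfolding P_def min_separator_def by blast
  have PW: "P \<inter> W = {}" using Psep unfolding separator_def by blast
  have PQ: "P \<inter> Q = {}" unfolding P_def out_nbrs_def by blast
  have hdSW: "hd S \<subseteq> W" using S unfolding ordered_partition_def by (auto simp: hd_in_set)
  have WQ: "(W - hd S) \<inter> Q = {}" using Q(2) by blast
  have hdSR: "hd S \<subseteq> R"
  proof
    fix a assume a: "a \<in> hd S"
    then have "a \<in> V - X" using hdSW W(1) XW by blast
    then show "a \<in> R" unfolding R_def reach_set_def reaches_def using a by blast
  qed
  have RQ: "R \<subseteq> Q"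
  proof
    fix v assume "v \<in> R"
    then obtain a where a: "a \<in> hd S" and rv: "reaches (V - X) (induced_arcs E (V - X)) a v"
      unfolding R_def reach_set_def by blast
    let ?r = "induced_arcs (induced_arcs E (V - X)) (V - X)"
    show "v \<in> Q"
    proof (rule ccontr)
      assume "v \<notin> Q"
      then obtain y z where yz: "(a, y) \<in> ?r\<^sup>*" "(y, z) \<in> ?r" "y \<in> Q" "z \<notin> Q"
        using cross_rt[of a v ?r Q] rv a Q(1) unfolding reaches_def by blast
      have "z \<in> V - X" "(y, z) \<in> E" using yz(2) unfolding induced_arcs_def by auto
      then have "z \<in> P" unfolding P_def out_nbrs_def using yz EV by blast
      moreover have "z \<in> R"
      proof -
        have "(a, z) \<in> (induced_arcs (induced_arcs E (V - X)) (V - X))\<^sup>*"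
          using yz(1,2) by (rule rtrancl.rtrancl_into_rtrancl)
        moreover have "a \<in> V - X" using a hdSW W(1) XW by blast
        ultimately show ?thesis unfolding R_def reach_set_def reaches_def
          using a \<open>z \<in> V - X\<close> by blast
      qed
      ultimately show False using X(2) unfolding R_def P_def by blast
    qed
  qed
  have NX: "N \<subseteq> X"
  proof
    fix v assume "v \<in> N"
    then obtain u where v: "v \<in> V" "v \<notin> R" "u \<in> R" "(u, v) \<in> E"
      unfolding N_def out_nbrs_def by blast
    then obtain a where a: "a \<in> hd S" and ru: "reaches (V - X) (induced_arcs E (V - X)) a u"
      unfolding R_def reach_set_def by blast
    show "v \<in> X"
    proof (rule ccontr)
      assume "v \<notin> X"
      then have "reaches (V - X) (induced_arcs E (V - X)) a v"
      proof -
        have r1: "(a, u) \<in> (induced_arcs (induced_arcs E (V - X)) (V - X))\<^sup>*"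
          "u \<in> V - X" "a \<in> V - X" using ru unfolding reaches_def by auto
        have "(u, v) \<in> induced_arcs (induced_arcs E (V - X)) (V - X)"
          using r1(2) v \<open>v \<notin> X\<close> unfolding induced_arcs_def by blast
        then have "(a, v) \<in> (induced_arcs (induced_arcs E (V - X)) (V - X))\<^sup>*"
          by (rule rtrancl.rtrancl_into_rtrancl[OF r1(1)])
        then show ?thesis using r1(3) v \<open>v \<notin> X\<close> unfolding reaches_def by blast
      qed
      then show False using a v(2) unfolding R_def reach_set_def by blast
    qed
  qed
  have NQP: "N \<subseteq> Q \<union> P"
    using RQ unfolding N_def P_def out_nbrs_def by blast
  have Nsep: "separator V E (hd S) (W - hd S) N"
    unfolding separator_def
  proof (intro conjI notI)
    show "N \<subseteq> V" unfolding N_def out_nbrs_def by blast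
    show "N \<inter> (hd S \<union> (W - hd S)) = {}" using NX XW hdSW by blast
  next
    assume "\<exists>p. dpath (V - N) (induced_arcs E (V - N)) p \<and> hd p \<in> hd S \<and> last p \<in> W - hd S"
    then obtain p where p: "dpath (V - N) (induced_arcs E (V - N)) p" "hd p \<in> hd S"
      "last p \<in> W - hd S" by blast
    have "p ! 0 \<in> R" using p hdSR unfolding dpath_def by (simp add: hd_conv_nth subset_iff)
    moreover have "last p \<notin> R" using p(3) RQ WQ by blast
    moreover have "0 < length p" using p unfolding dpath_def by simp
    ultimately obtain i where i: "Suc i < length p" "p ! i \<in> R" "p ! Suc i \<notin> R"
      using cross_list[of 0 p R] by blast
    then have "(p ! i, p ! Suc i) \<in> induced_arcs E (V - N)" "p ! Suc i \<in> set p"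
      using p(1) unfolding dpath_def by auto
    then have "p ! Suc i \<in> N" "p ! Suc i \<in> V - N" using i EV p(1)
      unfolding N_def out_nbrs_def induced_arcs_def dpath_def by auto
    then show False by blast
  qed
  have "card P \<le> card N" using Pmin Nsep by blast
  also have "card N \<le> card (X \<inter> (Q \<union> P))"
    using NX NQP fin XV by (intro card_mono) (auto intro: finite_subset)
  finally have cPX: "card P \<le> card (X \<inter> (Q \<union> P))" .
  have X'eq: "X' = (X - (Q \<union> P)) \<union> P" unfolding X'_def by blast
  have finX: "finite X" using XV fin by (rule finite_subset)
  have finP: "finite P" using PV fin by (rule finite_subset)
  have "card X' = card (X - (Q \<union> P)) + card P"
  proof -
    have f1: "finite (X - (Q \<union> P))" using finX by blast
    have d1: "(X - (Q \<union> P)) \<inter> P = {}" by blast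
    show ?thesis unfolding X'eq by (rule card_Un_disjoint[OF f1 finP d1])
  qed
  moreover have "card X = card (X - (Q \<union> P)) + card (X \<inter> (Q \<union> P))"
    using card_Int_Diff[OF finX, of "Q \<union> P"] by simp
  ultimately have cX': "card X' \<le> card X" using cPX by linarith
  have sepX': "set p \<inter> X' \<noteq> {}"
    if ij: "i < j" "j < length S" and p: "dpath V E p" "hd p \<in> S ! i" "last p \<in> S ! j" for i j p
  proof -
    obtain x where x: "x \<in> set p" "x \<in> X" using Xsep[OF ij p] by blast
    show ?thesis
    proof (cases "x \<in> Q")
      case False
      then show ?thesis using x unfolding X'_def by blast
    next
      case True
      obtain m where m: "m < length p" "p ! m = x" using x by (meson in_set_conv_nth)
      have "S ! j \<subseteq> W" using ij S unfolding ordered_partition_def by auto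
      moreover have "S ! j \<inter> hd S = {}" using ij S unfolding ordered_partition_def
        by (metis hd_conv_nth length_greater_0_conv less_nat_zero_code not_less_zero)
      ultimately have "last p \<notin> Q" using p(3) WQ by blast
      then obtain i' where i': "Suc i' < length p" "p ! i' \<in> Q" "p ! Suc i' \<notin> Q"
        using cross_list[of m p Q] m True by blast
      then have "(p ! i', p ! Suc i') \<in> E" "p ! Suc i' \<in> set p" "p ! Suc i' \<in> V"
        using p(1) unfolding dpath_def by auto
      then have "p ! Suc i' \<in> P" using i' unfolding P_def out_nbrs_def by auto
      then show ?thesis using \<open>p ! Suc i' \<in> set p\<close> unfolding X'_def by blast
    qed
  qed
  have delX': "H_deletion_set \<H> V E X'"
    unfolding H_deletion_set_def
  proof (intro allI impI ballI)
    fix C and h assume sc: "strong_component (V - X') (induced_arcs E (V - X')) C"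
      and h: "h \<in> \<H>"
    obtain VH EH where hh: "h = (VH, EH)" by fastforce
    let ?r = "induced_arcs (induced_arcs E (V - X')) (V - X')"
    have "\<not> contains_copy C (induced_arcs E C) VH EH"
    proof
      assume cp: "contains_copy C (induced_arcs E C) VH EH"
      have scd: "C \<noteq> {} \<and> C \<subseteq> V - X' \<and>
          (\<forall>u\<in>C. \<forall>v\<in>C. reaches (V - X') (induced_arcs E (V - X')) u v)"
        using sc unfolding strong_component_def by (elim conjE) (intro conjI; assumption)
      then have Cne: "C \<noteq> {}" and CV: "C \<subseteq> V - X'" by auto
      have Cr: "(u, v) \<in> ?r\<^sup>*" if "u \<in> C" "v \<in> C" for u v
      proof -
        have "reaches (V - X') (induced_arcs E (V - X')) u v" using scd that by blast
        then show ?thesis unfolding reaches_def by blast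
      qed
      show False
      proof (cases "C \<inter> Q = {}")
        case False
        then obtain c where c: "c \<in> C" "c \<in> Q" by blast
        have "C \<subseteq> Q"
        proof
          fix v assume v: "v \<in> C"
          show "v \<in> Q"
          proof (rule ccontr)
            assume "v \<notin> Q"
            then obtain y z where yz: "(y, z) \<in> ?r" "y \<in> Q" "z \<notin> Q"
              using cross_rt[of c v ?r Q] Cr c v by blast
            then have "z \<in> V - X'" "(y, z) \<in> E" unfolding induced_arcs_def by auto
            then have "z \<in> P" using yz unfolding P_def out_nbrs_def by auto
            then show False using \<open>z \<in> V - X'\<close> unfolding X'_def by blast
          qed
        qed
        moreover have "\<not> contains_copy Q (induced_arcs E Q) VH EH" using Q(3) h hh by auto
        ultimately show False using copy_mono[OF cp] by blast
      next
        case True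
        then have CVX: "C \<subseteq> V - X" using CV unfolding X'_def by blast
        obtain c where c: "c \<in> C" using Cne by blast
        let ?re = "reaches (V - X) (induced_arcs E (V - X))"
        define C' where "C' = {w \<in> V - X. ?re c w \<and> ?re w c}"
        have Cin: "?re u v" if "u \<in> C" "v \<in> C" for u v
        proof -
          have "(u, v) \<in> (?r \<inter> C \<times> C)\<^sup>*"
            using sc_within[OF sc, of u v v] Cr that by blast
          moreover have "?r \<inter> C \<times> C \<subseteq> induced_arcs (induced_arcs E (V - X)) (V - X)"
            using CVX unfolding induced_arcs_def by blast
          ultimately have "(u, v) \<in> (induced_arcs (induced_arcs E (V - X)) (V - X))\<^sup>*"
            using rtrancl_mono by blast
          then show ?thesis using that CVX unfolding reaches_def by blast
        qed
        have CC': "C \<subseteq> C'"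
        proof
          fix v assume v: "v \<in> C"
          have "?re c v" "?re v c" using Cin c v by auto
          moreover have "v \<in> V - X" using CVX v by blast
          ultimately show "v \<in> C'" unfolding C'_def by blast
        qed
        have sc': "strong_component (V - X) (induced_arcs E (V - X)) C'"
          unfolding strong_component_def
        proof (intro conjI ballI impI)
          show "C' \<noteq> {}" using CC' c by blast
          show "C' \<subseteq> V - X" unfolding C'_def by blast
        next
          fix u v assume "u \<in> C'" "v \<in> C'"
          then have "?re u c" "?re c v" unfolding C'_def by auto
          then show "?re u v" by (rule reaches_trans)
        next
          fix w assume w: "w \<in> V - X" "\<exists>u\<in>C'. ?re u w \<and> ?re w u"
          then obtain u where u: "u \<in> C'" "?re u w" "?re w u" by blast
          then have uc: "?re c u" "?re u c" unfolding C'_def by auto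
          have "?re c w" using uc(1) u(2) by (rule reaches_trans)
          moreover have "?re w c" using u(3) uc(2) by (rule reaches_trans)
          ultimately show "w \<in> C'" unfolding C'_def using w(1) by blast
        qed
        have "\<forall>(VH, EH)\<in>\<H>. \<not> contains_copy C' (induced_arcs E C') VH EH"
          using Xdel sc' unfolding H_deletion_set_def by blast
        then have "\<not> contains_copy C' (induced_arcs E C') VH EH"
          using h hh by auto
        then show False using copy_mono[OF cp CC'] by blast
      qed
    qed
    then show "case h of (VH, EH) \<Rightarrow> \<not> contains_copy C (induced_arcs E C) VH EH"
      using hh by simp
  qed
  have "is_solution \<H> V E S W k X'"
    unfolding is_solution_def
  proof (intro conjI allI impI)
    show "X' \<subseteq> V" using XV PV unfolding X'_def by blast
    show "int (card X') \<le> k" using cX' cardX by linarith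
    show "X' \<inter> W = {}" using XW PW unfolding X'_def by blast
    show "H_deletion_set \<H> V E X'" by (rule delX')
  next
    fix i j p
    assume "i < j \<and> j < length S \<and> dpath V E p \<and> hd p \<in> S ! i \<and> last p \<in> S ! j"
    then show "set p \<inter> X' \<noteq> {}" using sepX' by blast
  qed
  moreover have "out_nbrs V E Q \<subseteq> X'" unfolding X'_def P_def by blast
  ultimately show ?thesis by blast
qed

end
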